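(* Let $N\ge1$ be an integer, $d>0$, $T>0$, and $0\le s_1\le\dots\le s_N$. Let $x^*$ be the optimal solution of the (assumed feasible) problem $$\min_{x\in\mathbb{R}^{N+1}}\ \sum_{i=1}^{N+1}x_i^2$$ subject to - $\sum_{i=1}^k x_i\ge s_k+kd$ for $1\le k\le N$, - $x_i\ge 2d$ for $2\le i\le N$, - $x_{N+1}\ge d$, - $\sum_{i=1}^{N+1}x_i=T+Nd$. Then $x_1^*>x_2^*$ only if $x_1^*=s_1+d$, and $x_1^*<x_2^*$ only if $x_i^*=2d$ for all $2\le i\le N$.
   Context: The problem arises from age-of-information minimization for a single energy harvesting transmitter with energy arrival times $s_k$, fixed service time $d$, and session length $T$. Its objective is strictly convex, so the optimal solution is unique. *)

theory Defs
  imports Complex_Main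
begin

text \<open>Vectors x in R^(N+1) are represented as functions nat => real, using indices 1..N+1;
  arrival times s_1..s_N as s 1 .. s N.\<close>

definition aoi_feasible :: "nat \<Rightarrow> real \<Rightarrow> real \<Rightarrow> (nat \<Rightarrow> real) \<Rightarrow> (nat \<Rightarrow> real) \<Rightarrow> bool" where
  "aoi_feasible N d T s x \<longleftrightarrow>
     (\<forall>k\<in>{1..N}. (\<Sum>i=1..k. x i) \<ge> s k + real k * d) \<and>
     (\<forall>i\<in>{2..N}. x i \<ge> 2 * d) \<and>
     x (N + 1) \<ge> d \<and>
     (\<Sum>i=1..N+1. x i) = T + real N * d"

definition aoi_optimal :: "nat \<Rightarrow> real \<Rightarrow> real \<Rightarrow> (nat \<Rightarrow> real) \<Rightarrow> (nat \<Rightarrow> real) \<Rightarrow> bool" where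
  "aoi_optimal N d T s x \<longleftrightarrow>
     aoi_feasible N d T s x \<and>
     (\<forall>y. aoi_feasible N d T s y \<longrightarrow> (\<Sum>i=1..N+1. (x i)\<^sup>2) \<le> (\<Sum>i=1..N+1. (y i)\<^sup>2))"

end

theory Submission
  imports Defs
begin

lemma sum_upd: fixes f :: "'a \<Rightarrow> real"
  assumes fin: "finite S"
  shows "sum (f(c:=v)) S = sum f S + (if c \<in> S then v - f c else 0)"
proof (cases "c \<in> S")
  case True
  have 1: "sum (f(c:=v)) S = v + sum (f(c:=v)) (S - {c})"
    using sum.remove[OF fin True, of "f(c:=v)"] by simp
  have 2: "sum (f(c:=v)) (S - {c}) = sum f (S - {c})" by (rule sum.cong) auto
  have 3: "sum f S = f c + sum f (S - {c})" using sum.remove[OF fin True, of f] .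
  show ?thesis using 1 2 3 True by simp
next
  case False
  have "sum (f(c:=v)) S = sum f S" by (rule sum.cong) (use False in auto)
  then show ?thesis using False by simp
qed

lemma sq_upd: "(\<lambda>i. ((f(c:=v)) i)\<^sup>2) = (\<lambda>i. (f i)\<^sup>2)(c := v\<^sup>2)"
  by (rule ext) simp

lemma upd2:
  fixes x :: "nat \<Rightarrow> real"
  assumes "finite S" and ab: "a \<noteq> b"
  shows "sum (x(a := x a - e, b := x b + e)) S
     = sum x S + (if b \<in> S then e else 0) - (if a \<in> S then e else 0)"
    and "sum (\<lambda>i. ((x(a := x a - e, b := x b + e)) i)\<^sup>2) S
     = sum (\<lambda>i. (x i)\<^sup>2) S + (if b \<in> S then (x b + e)\<^sup>2 - (x b)\<^sup>2 else 0)
        + (if a \<in> S then (x a - e)\<^sup>2 - (x a)\<^sup>2 else 0)"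
proof -
  show "sum (x(a := x a - e, b := x b + e)) S
     = sum x S + (if b \<in> S then e else 0) - (if a \<in> S then e else 0)"
    using ab by (simp only: sum_upd[OF assms(1)]) auto
next
  show "sum (\<lambda>i. ((x(a := x a - e, b := x b + e)) i)\<^sup>2) S
     = sum (\<lambda>i. (x i)\<^sup>2) S + (if b \<in> S then (x b + e)\<^sup>2 - (x b)\<^sup>2 else 0)
        + (if a \<in> S then (x a - e)\<^sup>2 - (x a)\<^sup>2 else 0)"
    using ab by (simp only: sq_upd sum_upd[OF assms(1)]) auto
qed

theorem lemma2:
  fixes N :: nat and d T :: real and s x :: "nat \<Rightarrow> real"
  assumes "N \<ge> 1" and "d > 0" and "T > 0"
    and "0 \<le> s 1" and "\<forall>k\<in>{1..<N}. s k \<le> s (Suc k)"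
    and "aoi_optimal N d T s x"
  shows "(x 1 > x 2 \<longrightarrow> x 1 = s 1 + d) \<and>
         (x 1 < x 2 \<longrightarrow> (\<forall>i\<in>{2..N}. x i = 2 * d))"
proof (intro conjI impI)
  have feas: "aoi_feasible N d T s x" and opt: "\<And>y. aoi_feasible N d T s y \<Longrightarrow>
      (\<Sum>i=1..N+1. (x i)\<^sup>2) \<le> (\<Sum>i=1..N+1. (y i)\<^sup>2)"
    using assms(6) unfolding aoi_optimal_def by auto
  note F = feas[unfolded aoi_feasible_def]
  {
    assume h: "x 1 > x 2"
    have x1ge: "x 1 \<ge> s 1 + d" using F assms(1) by force
    show "x 1 = s 1 + d"
    proof (rule ccontr)
      assume "x 1 \<noteq> s 1 + d"
      hence gt: "x 1 > s 1 + d" using x1ge by simp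
      define e where "e = min ((x 1 - x 2)/2) (x 1 - s 1 - d)"
      have e0: "e > 0" using h gt by (simp add: e_def)
      have e1: "e \<le> (x 1 - x 2)/2" "e \<le> x 1 - s 1 - d" unfolding e_def by (simp_all only: min.cobounded1 min.cobounded2)
      define y where "y = x(1 := x 1 - e, 2 := x 2 + e)"
      have ys: "\<And>S. finite S \<Longrightarrow> sum y S = sum x S + (if 2 \<in> S then e else 0) - (if 1 \<in> S then e else 0)"
        unfolding y_def by (rule upd2(1)) auto
      have "aoi_feasible N d T s y"
        unfolding aoi_feasible_def
      proof (intro conjI ballI)
        fix k assume k: "k \<in> {1..N}"
        show "(\<Sum>i=1..k. y i) \<ge> s k + real k * d"
        proof (cases "k = 1")
          case True
          then show ?thesis using ys[of "{1..k}"] e1 by simp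
        next
          case False
          then show ?thesis using ys[of "{1..k}"] k F by auto
        qed
      next
        fix i assume i: "i \<in> {2..N}"
        have "x i \<ge> 2 * d" using F i by auto
        then show "y i \<ge> 2 * d" using e0 i by (auto simp: y_def)
      next
        show "y (N+1) \<ge> d"
        proof (cases "N = 1")
          case True
          have "x 2 \<ge> d" using F True by (simp add: numeral_2_eq_2)
          then show ?thesis using True e0 by (simp add: y_def)
        next
          case False
          then show ?thesis using F assms(1) by (simp add: y_def)
        qed
      next
        show "(\<Sum>i=1..N+1. y i) = T + real N * d" using ys[of "{1..N+1}"] F assms(1) by auto
      qed
      hence "(\<Sum>i=1..N+1. (x i)\<^sup>2) \<le> (\<Sum>i=1..N+1. (y i)\<^sup>2)" by (rule opt)
      moreover have "(\<Sum>i=1..N+1. (y i)\<^sup>2) = (\<Sum>i=1..N+1. (x i)\<^sup>2) + ((x 2 + e)\<^sup>2 - (x 2)\<^sup>2)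
          + ((x 1 - e)\<^sup>2 - (x 1)\<^sup>2)"
        unfolding y_def using upd2(2)[where S="{1..N+1}" and x=x and a=1 and e=e and b=2] assms(1) by simp
      moreover have "((x 2 + e)\<^sup>2 - (x 2)\<^sup>2) + ((x 1 - e)\<^sup>2 - (x 1)\<^sup>2) = 2*e*(e - (x 1 - x 2))"
        by (simp add: power2_eq_square algebra_simps)
      moreover have "2*e*(e - (x 1 - x 2)) < 0" using e0 e1 h by (simp add: mult_pos_neg)
      ultimately show False by linarith
    qed
  }
  {
    assume h: "x 1 < x 2"
    show "\<forall>i\<in>{2..N}. x i = 2 * d"
    proof (rule ccontr)
      assume "\<not> (\<forall>i\<in>{2..N}. x i = 2 * d)"
      then obtain j where j: "j \<in> {2..N}" "x j \<noteq> 2 * d" by auto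
      have "\<exists>i\<in>{2..N}. x i > 2 * d \<and> x i > x 1"
      proof (cases "x 2 > 2 * d")
        case True
        then show ?thesis using j h by (intro bexI[of _ 2]) auto
      next
        case False
        hence "x 2 = 2 * d" using F j by force
        moreover have "x j > 2 * d" using F j by force
        ultimately show ?thesis using j h by (intro bexI[of _ j]) auto
      qed
      then obtain i where i: "i \<in> {2..N}" "x i > 2 * d" "x i > x 1" by auto
      define e where "e = min ((x i - x 1)/2) (x i - 2 * d)"
      have e0: "e > 0" using i by (simp add: e_def)
      have e1: "e \<le> (x i - x 1)/2" "e \<le> x i - 2 * d" unfolding e_def by (simp_all only: min.cobounded1 min.cobounded2)
      define y where "y = x(i := x i - e, 1 := x 1 + e)"
      have ys: "\<And>S. finite S \<Longrightarrow> sum y S = sum x S + (if 1 \<in> S then e else 0) - (if i \<in> S then e else 0)"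
        unfolding y_def using i by (intro upd2(1)) auto
      have "aoi_feasible N d T s y"
        unfolding aoi_feasible_def
      proof (intro conjI ballI)
        fix k assume k: "k \<in> {1..N}"
        show "(\<Sum>i=1..k. y i) \<ge> s k + real k * d"
        proof -
          have "sum x {1..k} \<ge> s k + real k * d" using F k by auto
          moreover have "sum y {1..k} \<ge> sum x {1..k}" using ys[of "{1..k}"] e0 by auto
          ultimately show ?thesis by linarith
        qed
      next
        fix j assume j: "j \<in> {2..N}"
        then show "y j \<ge> 2 * d" using F e0 e1 i by (auto simp: y_def)
      next
        show "y (N+1) \<ge> d" using F e0 i by (auto simp: y_def)
      next
        show "(\<Sum>i=1..N+1. y i) = T + real N * d" using ys[of "{1..N+1}"] F i by auto
      qed
      hence "(\<Sum>i=1..N+1. (x i)\<^sup>2) \<le> (\<Sum>i=1..N+1. (y i)\<^sup>2)" by (rule opt)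
      moreover have "(\<Sum>i=1..N+1. (y i)\<^sup>2) = (\<Sum>i=1..N+1. (x i)\<^sup>2) + ((x 1 + e)\<^sup>2 - (x 1)\<^sup>2)
          + ((x i - e)\<^sup>2 - (x i)\<^sup>2)"
        unfolding y_def using upd2(2)[where S="{1..N+1}" and x=x and a=i and e=e and b=1] i by simp
      moreover have "((x 1 + e)\<^sup>2 - (x 1)\<^sup>2) + ((x i - e)\<^sup>2 - (x i)\<^sup>2) = 2*e*(e - (x i - x 1))"
        by (simp add: power2_eq_square algebra_simps)
      moreover have "2*e*(e - (x i - x 1)) < 0" using e0 e1 i by (simp add: mult_pos_neg)
      ultimately show False by linarith
    qed
  }
qed

end
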